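(* Let $n$ be a positive integer and $N = n^2+n+1$. The equation $a^2+ab+b^2 = N$ has a solution in positive integers $(a,b)$ with $(a,b) \notin \{(n,1),(1,n)\}$ if and only if $N$ has at least two prime factors, counted with multiplicity, congruent to $1 \pmod 3$.
   Context: "Counted with multiplicity" means: if $N=\prod p^{e_p}$, the number of such factors is $\sum_{p\equiv 1 \ (\mathrm{mod}\ 3)} e_p$. *)

theory Defs
  imports "HOL-Computational_Algebra.Primes"
begin

definition count_1mod3_factors :: "nat \<Rightarrow> nat" where
  "count_1mod3_factors N = (\<Sum>p\<in>{p\<in>prime_factors N. p mod 3 = 1}. multiplicity p N)"

end

theory Submission
  imports Defs "HOL-Number_Theory.Number_Theory"
begin

lemma normalize_rep:
  fixes x y m t :: int
  assumes f: "x^2 + x*y + y^2 = m" and m: "m > 0" and E: "m dvd t^2+t+1" and D: "m dvd x - t*y"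
  shows "\<exists>a b. a > 0 \<and> b \<ge> 0 \<and> a^2+a*b+b^2 = m \<and> m dvd a - t*b"
proof -
  have comb: "m dvd A*(x - t*y) + B*(t^2+t+1)" for A B using D E by simp
  have nz: "\<not>(x = 0 \<and> y = 0)" using f m by auto
  show ?thesis
  proof (cases "y > 0")
    case True
    show ?thesis
    proof (cases "x > 0")
      case True with \<open>y>0\<close> show ?thesis using f D by (intro exI[of _ x] exI[of _ y]) auto
    next
      case False
      show ?thesis
      proof (cases "x + y > 0")
        case True
        have "(x+y) - t*(-x) = (1+t)*(x-t*y) + y*(t^2+t+1)" by (simp add: algebra_simps power2_eq_square)
        moreover have "(x+y)^2 + (x+y)*(-x) + (-x)^2 = m" using f by (simp add: algebra_simps power2_eq_square)
        ultimately show ?thesis using True False comb[of "1+t" y]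
          by (intro exI[of _ "x+y"] exI[of _ "-x"]) auto
      next
        case False
        have "y - t*(-x-y) = t*(x-t*y) + y*(t^2+t+1)" by (simp add: algebra_simps power2_eq_square)
        moreover have "y^2 + y*(-x-y) + (-x-y)^2 = m" using f by (simp add: algebra_simps power2_eq_square)
        ultimately show ?thesis using True False comb[of t y]
          by (intro exI[of _ y] exI[of _ "-x-y"]) auto
      qed
    qed
  next
    case False
    show ?thesis
    proof (cases "y = 0")
      case True
      then show ?thesis
      proof (cases "x > 0")
        case True with \<open>y=0\<close> show ?thesis using f D by (intro exI[of _ x] exI[of _ y]) auto
      next
        case False
        hence "x < 0" using nz \<open>y=0\<close> by auto
        moreover have "(-x) - t*(-y) = (-1)*(x-t*y) + 0*(t^2+t+1)" by (simp add: algebra_simps)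
        ultimately show ?thesis using f \<open>y=0\<close> comb[of "-1" 0]
          by (intro exI[of _ "-x"] exI[of _ "-y"]) (auto simp: power2_eq_square)
      qed
    next
      case False
      hence y: "y < 0" using \<open>\<not> y > 0\<close> by auto
      show ?thesis
      proof (cases "x + y \<ge> 0")
        case True
        have "(-y) - t*(x+y) = (-t)*(x-t*y) + (-y)*(t^2+t+1)" by (simp add: algebra_simps power2_eq_square)
        moreover have "(-y)^2 + (-y)*(x+y) + (x+y)^2 = m" using f by (simp add: algebra_simps power2_eq_square)
        ultimately show ?thesis using True y comb[of "-t" "-y"]
          by (intro exI[of _ "-y"] exI[of _ "x+y"]) auto
      next
        case False
        show ?thesis
        proof (cases "x \<ge> 0")
          case True
          have "(-x-y) - t*x = (-1-t)*(x-t*y) + (-y)*(t^2+t+1)" by (simp add: algebra_simps power2_eq_square)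
          moreover have "(-x-y)^2 + (-x-y)*x + x^2 = m" using f by (simp add: algebra_simps power2_eq_square)
          ultimately show ?thesis using True False comb[of "-1-t" "-y"]
            by (intro exI[of _ "-x-y"] exI[of _ "x"]) auto
        next
          case False
          have "(-x) - t*(-y) = (-1)*(x-t*y) + 0*(t^2+t+1)" by (simp add: algebra_simps)
          moreover have "(-x)^2 + (-x)*(-y) + (-y)^2 = m" using f by (simp add: algebra_simps power2_eq_square)
          ultimately show ?thesis using False y comb[of "-1" 0]
            by (intro exI[of _ "-x"] exI[of _ "-y"]) auto
        qed
      qed
    qed
  qed
qed

lemma repr_exists:
  fixes m :: nat
  shows "m \<ge> 1 \<Longrightarrow> int m dvd t^2 + t + 1 \<Longrightarrow> \<exists>x y::int. x^2 + x*y + y^2 = int m \<and> int m dvd x - t*y"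
proof (induction m arbitrary: t rule: less_induct)
  case (less m)
  show ?case
  proof (cases "m = 1")
    case True then show ?thesis by (intro exI[of _ 1] exI[of _ 0]) simp
  next
    case False
    hence m2: "m \<ge> 2" using less.prems by simp
    define r where "r = t mod int m"
    have r: "0 \<le> r" "r < int m" using m2 by (auto simp: r_def)
    define t' where "t' = (if 2*r+1 \<le> int m then r else r - int m)"
    have tt': "int m dvd t - t'"
    proof -
      have "int m dvd t - r" unfolding r_def by (rule dvd_minus_mod)
      moreover have "int m dvd r - t'" by (simp add: t'_def)
      ultimately have "int m dvd (t - r) + (r - t')" by (rule dvd_add)
      thus ?thesis by simp
    qed
    have bnd: "\<bar>2*t'+1\<bar> \<le> int m" using r by (auto simp: t'_def)
    have "t'^2+t'+1 = (t^2+t+1) + (t'-t)*(t'+t+1)" by (simp add: algebra_simps power2_eq_square)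
    moreover have "int m dvd (t^2+t+1) + (t'-t)*(t'+t+1)"
      using less.prems(2) tt' by (metis dvd_add dvd_minus_iff dvd_mult2 minus_diff_eq)
    ultimately have "int m dvd t'^2 + t' + 1" by (simp only:)
    then obtain k where k: "t'^2 + t' + 1 = int m * k" by (auto elim: dvdE)
    have four: "4*(t'^2+t'+1) = (2*t'+1)^2 + 3" by (simp add: algebra_simps power2_eq_square)
    have "t'^2+t'+1 > 0" using four by (smt (verit) zero_le_power2)
    hence kpos: "k > 0" using k m2 by (simp add: zero_less_mult_iff)
    have "(2*t'+1)^2 \<le> (int m)^2"
      by (metis abs_ge_zero bnd power2_abs power_mono)
    hence "4*int m*k \<le> (int m)^2 + 3" using four k by simp
    hence klt: "k < int m"
    proof -
      assume h: "4*int m*k \<le> (int m)^2 + 3"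
      show "k < int m"
      proof (rule ccontr)
        assume "\<not> k < int m"
        hence "int m * int m \<le> int m * k" by (simp add: mult_left_mono)
        moreover have "int m * int m \<ge> 4" using m2
        proof -
          have "int m \<ge> 2" using m2 by simp
          thus ?thesis using mult_mono[of 2 "int m" 2 "int m"] by simp
        qed
        ultimately show False using h by (simp add: power2_eq_square)
      qed
    qed
    define K where "K = nat k"
    have K: "K < m" "K \<ge> 1" "int K = k" using klt kpos by (auto simp: K_def)
    have "int K dvd t'^2 + t' + 1" using k K by simp
    from less.IH[OF K(1) K(2) this] obtain u v where
      uv: "u^2 + u*v + v^2 = k" and "k dvd u - t'*v" using K by auto
    then obtain j where j: "u - t'*v = k*j" by (auto elim: dvdE)
    hence u: "u = t'*v + k*j" by simp
    have "k = v^2 * (t'^2+t'+1) + k*j*(2*t'*v + v + k*j)"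
      using uv unfolding u by (simp add: algebra_simps power2_eq_square)
    hence "k = v^2 * (int m * k) + k*j*(2*t'*v + v + k*j)" by (simp only: k)
    hence "k * 1 = k * (v^2 * int m + j*(2*t'+1)*v + k*j^2)"
      by (simp add: algebra_simps power2_eq_square)
    hence one: "v^2 * int m + j*(2*t'+1)*v + k*j^2 = 1" using kpos
      by (simp only: mult_cancel_left) simp
    define x where "x = v * int m + t'*j"
    have "x^2 + x*j + j^2 = v^2*(int m)^2 + v*int m*j*(2*t'+1) + j^2*(t'^2+t'+1)"
      unfolding x_def by (simp add: algebra_simps power2_eq_square)
    also have "\<dots> = int m * (v^2 * int m + j*(2*t'+1)*v + k*j^2)"
      unfolding k by (simp add: algebra_simps power2_eq_square)
    also have "\<dots> = int m" using one by simp
    finally have f: "x^2 + x*j + j^2 = int m" .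
    have "x - t*j = v * int m - (t - t')*j" unfolding x_def by (simp add: algebra_simps)
    moreover have "int m dvd v * int m - (t - t')*j" using tt' by (simp add: dvd_diff)
    ultimately have "int m dvd x - t*j" by simp
    with f show ?thesis by blast
  qed
qed

lemma N_not_sq:
  fixes n k :: nat assumes "n > 0" shows "k^2 \<noteq> n^2+n+1"
proof
  assume h: "k^2 = n^2+n+1"
  show False
  proof (cases "k \<le> n")
    case True
    hence "k^2 \<le> n^2" by (simp add: power_mono)
    with h show False by simp
  next
    case False
    hence "(n+1)^2 \<le> k^2" by (intro power_mono) auto
    with h assms show False by (simp add: power2_eq_square algebra_simps)
  qed
qed

lemma N_9: "\<not> 9 dvd (n::nat)^2+n+1"
proof
  assume h: "9 dvd n^2+n+1"
  define r where "r = n mod 9"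
  define q where "q = n div 9"
  have n: "n = 9*q + r" by (simp add: q_def r_def)
  have "n^2+n+1 = 9*(9*q*q + 2*q*r + q) + (r^2+r+1)" unfolding n by (simp add: power2_eq_square algebra_simps)
  with h have "9 dvd r^2+r+1" by (metis dvd_add_right_iff dvd_triv_left)
  moreover have "r < 9" by (simp add: r_def)
  hence "r = 0 \<or> r = 1 \<or> r = 2 \<or> r = 3 \<or> r = 4 \<or> r = 5 \<or> r = 6 \<or> r = 7 \<or> r = 8" by linarith
  hence "r^2+r+1 \<in> {1,3,7,13,21,31,43,57,73}" by (elim disjE) (simp_all add: power2_eq_square)
  ultimately show False by (auto simp: dvd_eq_mod_eq_0)
qed

lemma F2:
  fixes n q :: nat
  assumes q: "prime q" and d: "q dvd n^2+n+1" and q3: "q \<noteq> 3"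
  shows "q mod 3 = 1"
proof -
  have nq: "\<not> q dvd n"
  proof
    assume "q dvd n"
    hence "q dvd n^2+n" by (simp add: power2_eq_square)
    with d have "q dvd 1" by (metis dvd_add_right_iff add.assoc)
    with q show False by simp
  qed
  hence n1: "n \<ge> 1" by (cases n) auto
  have ferm: "[n^(q-1) = 1] (mod q)" using fermat_theorem[OF q nq] .
  obtain c where c: "n^2+n+1 = q*c" using d by (auto elim: dvdE)
  have "n^3 = (n-1)*(n^2+n+1) + 1" using n1
    by (cases n) (auto simp: power2_eq_square power3_eq_cube algebra_simps)
  hence "n^3 = (n-1)*(q*c) + 1" by (simp only: c)
  hence "n^3 = q*((n-1)*c) + 1" by (simp add: algebra_simps)
  moreover have "(1 + q*((n-1)*c)) mod q = 1 mod q" by (rule mod_mult_self2)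
  ultimately have n3: "[n^3 = 1] (mod q)" unfolding cong_def by (simp add: add.commute)
  have "q mod 3 \<noteq> 0"
  proof
    assume "q mod 3 = 0"
    hence "3 dvd q" by auto
    with q have "3 = q" by (intro primes_dvd_imp_eq) auto
    with q3 show False by simp
  qed
  moreover have "q mod 3 \<noteq> 2"
  proof
    assume h: "q mod 3 = 2"
    define k where "k = (q-1) div 3"
    have "q - 1 = 3*k + 1" using h unfolding k_def by presburger
    hence "n^(q-1) = (n^3)^k * n" by (simp add: power_mult power_add)
    moreover have "[(n^3)^k * n = 1^k * n] (mod q)" using n3 by (intro cong_mult cong_pow cong_refl)
    ultimately have "[n = 1] (mod q)" using ferm by (metis cong_sym cong_trans mult_1 power_one)
    hence "[n^2+n+1 = 1^2+1+1] (mod q)" by (intro cong_add cong_pow cong_refl)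
    hence "q dvd 3" using d by (simp add: cong_dvd_iff numeral_3_eq_3)
    moreover have "prime (3::nat)" by simp
    ultimately have "q = 3" using q by (intro primes_dvd_imp_eq) auto
    with q3 show False by auto
  qed
  ultimately show ?thesis by linarith
qed

lemma pow3:
  fixes m :: nat
  assumes m: "m > 0" and all3: "\<And>q. prime q \<Longrightarrow> q dvd m \<Longrightarrow> q = 3" and n9: "\<not> 9 dvd m"
  shows "m = 1 \<or> m = 3"
proof (cases "m = 1")
  case False
  then obtain q where "prime q" "q dvd m" using prime_factor_nat by blast
  hence "3 dvd m" using all3 by auto
  then obtain c where c: "m = 3*c" by (auto elim: dvdE)
  show ?thesis
  proof (cases "c = 1")
    case False
    then obtain q' where q': "prime q'" "q' dvd c" using prime_factor_nat by blast
    hence "q' dvd m" using c by simp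
    hence "q' = 3" using all3 q' by auto
    with q' c have "9 dvd m" by auto
    with n9 show ?thesis by simp
  qed (simp add: c)
qed simp

lemma count_ge_mult:
  assumes "p \<in> {p\<in>prime_factors N. p mod 3 = 1}"
  shows "multiplicity p N \<le> count_1mod3_factors N"
  unfolding count_1mod3_factors_def using assms
  by (intro member_le_sum) auto

lemma count_ge_two:
  assumes "p \<in> {p\<in>prime_factors N. p mod 3 = 1}" "q \<in> {p\<in>prime_factors N. p mod 3 = 1}" "p \<noteq> q"
  shows "multiplicity p N + multiplicity q N \<le> count_1mod3_factors N"
proof -
  have "multiplicity p N + multiplicity q N = (\<Sum>x\<in>{p,q}. multiplicity x N)" using assms(3) by simp
  also have "\<dots> \<le> count_1mod3_factors N"
    unfolding count_1mod3_factors_def using assms by (intro sum_mono2) auto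
  finally show ?thesis .
qed

lemma classify:
  fixes n :: nat
  assumes n: "n > 0" and c: "count_1mod3_factors (n^2+n+1) \<le> 1"
  shows "prime (n^2+n+1) \<or> (\<exists>p. prime p \<and> p \<noteq> 3 \<and> n^2+n+1 = 3*p)"
proof -
  define N where "N = n^2+n+1"
  have "0 < n^2" using n by simp
  hence N3: "N \<ge> 3" using n unfolding N_def by linarith
  hence N0: "N \<noteq> 0" by simp
  have c': "count_1mod3_factors N \<le> 1" using c by (simp add: N_def)
  define S where "S = {p\<in>prime_factors N. p mod 3 = 1}"
  have F: "q = 3 \<or> q \<in> S" if "prime q" "q dvd N" for q
    using F2[of q n] that N0 by (auto simp: S_def N_def in_prime_factors_iff)
  have n9: "\<not> 9 dvd N" using N_9 by (simp add: N_def)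
  show ?thesis
  proof (cases "S = {}")
    case True
    hence "N = 1 \<or> N = 3" using F n9 N0 by (intro pow3) auto
    hence "N = 3" using N3 by auto
    hence "prime N" by simp
    thus ?thesis unfolding N_def by blast
  next
    case False
    then obtain p where pS: "p \<in> S" by auto
    hence p: "prime p" "p dvd N" "p mod 3 = 1" by (auto simp: S_def in_prime_factors_iff)
    have m1: "multiplicity p N \<ge> 1" using p N0 prime_multiplicity_gt_zero_iff[of p N] by simp
    have mp: "multiplicity p N \<le> 1" using count_ge_mult[of p N] pS c' by (simp add: S_def)
    have np2: "\<not> p^2 dvd N"
    proof
      assume "p^2 dvd N"
      hence "2 \<le> multiplicity p N" using N0 p by (intro multiplicity_geI) auto
      with mp show False by simp
    qed
    have Sp: "q = p" if "q \<in> S" for q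
    proof (rule ccontr)
      assume "q \<noteq> p"
      have "multiplicity q N \<ge> 1" using that N0 prime_multiplicity_gt_zero_iff[of q N]
        by (auto simp: S_def in_prime_factors_iff)
      with count_ge_two[of p N q] pS that \<open>q \<noteq> p\<close> m1 c' show False by (simp add: S_def)
    qed
    obtain M where M: "N = p*M" using p by (auto elim: dvdE)
    have M0: "M > 0" using M N0 by (cases M) auto
    have M3: "q = 3" if "prime q" "q dvd M" for q
    proof -
      have "q dvd N" using that M by simp
      from F[OF that(1) this] show ?thesis
      proof
        assume "q \<in> S"
        hence "q = p" by (rule Sp)
        with that M have "p^2 dvd N" by (auto simp: power2_eq_square)
        with np2 show ?thesis by simp
      qed
    qed
    have "\<not> 9 dvd M" using n9 M by (metis dvd_mult)
    hence "M = 1 \<or> M = 3" using M0 M3 by (intro pow3) auto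
    moreover have "p \<noteq> 3" using p by auto
    ultimately show ?thesis using M p by (auto simp: N_def)
  qed
qed

lemma get_primes:
  fixes N :: nat
  assumes N0: "N \<noteq> 0" and c: "count_1mod3_factors N \<ge> 2"
  shows "(\<exists>p. prime p \<and> p^2 dvd N) \<or>
         (\<exists>p q. prime p \<and> prime q \<and> p \<noteq> q \<and> p mod 3 = 1 \<and> q mod 3 = 1 \<and> p dvd N \<and> q dvd N \<and> \<not> p^2 dvd N)"
proof (cases "\<exists>p. prime p \<and> p^2 dvd N")
  case False
  define S where "S = {p\<in>prime_factors N. p mod 3 = 1}"
  have fin: "finite S" by (simp add: S_def)
  have le1: "multiplicity p N \<le> 1" if "p \<in> S" for p
  proof (rule ccontr)
    assume "\<not> multiplicity p N \<le> 1"
    hence "p^2 dvd p^multiplicity p N" by (intro le_imp_power_dvd) auto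
    hence "p^2 dvd N" using multiplicity_dvd dvd_trans by blast
    with False that show False by (auto simp: S_def in_prime_factors_iff)
  qed
  have "2 \<le> (\<Sum>p\<in>S. multiplicity p N)" using c by (simp add: count_1mod3_factors_def S_def)
  also have "\<dots> \<le> (\<Sum>p\<in>S. 1)" using le1 by (intro sum_mono) auto
  finally have cS: "2 \<le> card S" by simp
  then obtain p where pS: "p \<in> S" by fastforce
  have "\<not> S \<subseteq> {p}"
  proof
    assume "S \<subseteq> {p}"
    hence "card S \<le> card {p}" by (intro card_mono) auto
    with cS show False by simp
  qed
  then obtain q where qS: "q \<in> S" "q \<noteq> p" by auto
  show ?thesis using pS qS False by (auto simp: S_def in_prime_factors_iff)
qed simp

lemma prodlt: "x^2 < N \<Longrightarrow> y^2 < N \<Longrightarrow> x*y < (N::nat)"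
proof (cases "x \<le> y")
  case True
  assume "y^2 < N"
  hence "y*y < N" by (simp add: power2_eq_square)
  moreover have "x*y \<le> y*y" using True by (simp add: mult_right_mono)
  ultimately show ?thesis by linarith
next
  case False
  assume "x^2 < N"
  hence "x*x < N" by (simp add: power2_eq_square)
  moreover have "x*y \<le> x*x" using False by (simp add: mult_left_mono)
  ultimately show ?thesis by linarith
qed

lemma fwd:
  fixes n a b :: nat
  assumes n: "n > 0" and c: "count_1mod3_factors (n^2+n+1) \<le> 1"
    and a: "a > 0" and b: "b > 0" and f: "a^2+a*b+b^2 = n^2+n+1"
  shows "(a,b) = (n,1) \<or> (a,b) = (1,n)"
proof (rule ccontr)
  assume ne: "\<not> ((a,b) = (n,1) \<or> (a,b) = (1,n))"
  define N where "N = n^2+n+1"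
  have N0: "N > 0" by (simp add: N_def)
  have fN: "a^2+a*b+b^2 = N" using f by (simp add: N_def)
  have Xne: "a \<noteq> b*n"
  proof
    assume h: "a = b*n"
    have "a^2+a*b+b^2 = b^2*N" unfolding h N_def by (simp add: algebra_simps power2_eq_square)
    hence "b^2*N = 1*N" using fN by (metis mult_1)
    hence "b^2 = 1" using mult_right_cancel[of N "b^2" 1] N0 by simp
    hence "b = 1" by (simp add: power2_eq_square)
    with h ne show False by simp
  qed
  have Yne: "a*n \<noteq> b"
  proof
    assume h: "a*n = b"
    have "a^2+a*b+b^2 = a^2*N" unfolding h[symmetric] N_def by (simp add: algebra_simps power2_eq_square)
    hence "a^2*N = 1*N" using fN by (metis mult_1)
    hence "a^2 = 1" using mult_right_cancel[of N "a^2" 1] N0 by simp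
    hence "a = 1" by (simp add: power2_eq_square)
    with h ne show False by simp
  qed
  have a2: "a^2 < N" using fN a b by (metis add_less_cancel_left add.assoc add.right_neutral add_gr_0 nat_0_less_mult_iff zero_less_power)
  have b2: "b^2 < N" using fN a b by (metis add_less_cancel_right add.commute add_gr_0 nat_0_less_mult_iff zero_less_power less_add_same_cancel2)
  have n2: "n^2 < N" by (simp add: N_def)
  have o2: "1^2 < N" using n by (simp add: N_def)
  have bn: "b*n < N" by (rule prodlt[OF b2 n2])
  have an: "a*n < N" by (rule prodlt[OF a2 n2])
  have aN: "a < N" using prodlt[OF a2 o2] by simp
  have bN: "b < N" using prodlt[OF b2 o2] by simp
  define X where "X = int a - int b * int n"
  define Y where "Y = int a * int n - int b"
  have fi: "(int a)^2 + int a * int b + (int b)^2 = int N" using fN by (metis of_nat_add of_nat_mult of_nat_power)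
  have Ni: "int N = (int n)^2 + int n + 1" by (simp add: N_def)
  have "X*Y = int n*((int a)^2 + int a * int b + (int b)^2) - int a * int b * ((int n)^2 + int n + 1)"
    unfolding X_def Y_def by (simp add: algebra_simps power2_eq_square)
  hence key: "X*Y = int N * (int n - int a * int b)" unfolding fi Ni[symmetric] by (simp add: algebra_simps)
  have X0: "X \<noteq> 0" using Xne unfolding X_def by (metis eq_iff_diff_eq_0 of_nat_eq_iff of_nat_mult)
  have Y0: "Y \<noteq> 0" using Yne unfolding Y_def by (metis eq_iff_diff_eq_0 of_nat_eq_iff of_nat_mult)
  have "int b * int n < int N" using bn by (metis of_nat_less_iff of_nat_mult)
  moreover have "int a < int N" "0 \<le> int b * int n" "0 \<le> int a" using aN by simp_all
  ultimately have Xb: "\<bar>X\<bar> < int N" unfolding X_def abs_less_iff by linarith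
  have "int a * int n < int N" using an by (metis of_nat_less_iff of_nat_mult)
  moreover have "int b < int N" "0 \<le> int a * int n" "0 \<le> int b" using bN by simp_all
  ultimately have Yb: "\<bar>Y\<bar> < int N" unfolding Y_def abs_less_iff by linarith
  have nd: "\<not> d dvd X" "\<not> d dvd Y" if "d \<ge> int N" for d
  proof -
    show "\<not> d dvd X"
    proof
      assume "d dvd X" with dvd_imp_le_int[OF X0 this] that Xb show False by simp
    qed
    show "\<not> d dvd Y"
    proof
      assume "d dvd Y" with dvd_imp_le_int[OF Y0 this] that Yb show False by simp
    qed
  qed
  have "int N dvd X*Y" using key by simp
  from classify[OF n c] show False
  proof
    assume "prime (n^2+n+1)"
    hence "prime N" by (simp add: N_def)
    hence "prime (int N)" by (simp only: prime_nat_int_transfer)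
    with \<open>int N dvd X*Y\<close> have "int N dvd X \<or> int N dvd Y" by (simp add: prime_dvd_mult_iff)
    with nd show False by auto
  next
    assume "\<exists>p. prime p \<and> p \<noteq> 3 \<and> n^2+n+1 = 3*p"
    then obtain p where p: "prime p" "p \<noteq> 3" and N3: "N = 3*p" by (auto simp: N_def)
    have pr3: "prime (3::int)" by simp
    have "int N = ((int n) - 1)^2 + 3*int n" unfolding Ni by (simp add: algebra_simps power2_eq_square)
    moreover have "(3::int) dvd int N" using N3 by simp
    ultimately have "3 dvd ((int n) - 1)^2" by (metis dvd_add_left_iff dvd_triv_left)
    hence d3n: "3 dvd int n - 1" using pr3 prime_dvd_power by blast
    have "int N = ((int a) - int b)^2 + 3*(int a*int b)" unfolding fi[symmetric] by (simp add: algebra_simps power2_eq_square)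
    with \<open>(3::int) dvd int N\<close> have "3 dvd ((int a) - int b)^2" by (metis dvd_add_left_iff dvd_triv_left)
    hence d3ab: "3 dvd int a - int b" using pr3 prime_dvd_power by blast
    have "X = (int a - int b) - int b*(int n - 1)" unfolding X_def by (simp add: algebra_simps)
    hence d3X: "3 dvd X" using d3n d3ab by simp
    have "Y = (int a - int b) + int a*(int n - 1)" unfolding Y_def by (simp add: algebra_simps)
    hence d3Y: "3 dvd Y" using d3n d3ab by simp
    have pi: "prime (int p)" using p by (simp add: prime_nat_int_transfer)
    have "int p dvd X*Y" using \<open>int N dvd X*Y\<close> N3 by (metis dvd_mult_right of_nat_mult)
    hence "int p dvd X \<or> int p dvd Y" using pi by (simp add: prime_dvd_mult_iff)
    moreover have cop: "coprime 3 (int p)" using primes_coprime[OF pr3 pi] p(2) by auto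
    ultimately have "3 * int p dvd X \<or> 3 * int p dvd Y" using d3X d3Y divides_mult by blast
    moreover have "3 * int p = int N" using N3 by simp
    ultimately show False using nd by auto
  qed
qed

lemma rep_pos:
  fixes m :: nat and t :: int
  assumes m: "m \<ge> 1" and d: "int m dvd t^2+t+1" and nsq: "\<And>k::nat. k^2 \<noteq> m"
  shows "\<exists>a b::nat. a > 0 \<and> b > 0 \<and> a^2+a*b+b^2 = m \<and> int m dvd int a - t*int b"
proof -
  obtain x y where xy: "x^2 + x*y + y^2 = int m" "int m dvd x - t*y" using repr_exists[OF m d] by blast
  have "int m > 0" using m by simp
  from normalize_rep[OF xy(1) this d xy(2)] obtain x' y' where
    p: "x' > 0" "y' \<ge> 0" "x'^2+x'*y'+y'^2 = int m" "int m dvd x' - t*y'" by blast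
  have y0: "y' \<noteq> 0"
  proof
    assume "y' = 0"
    hence "(int (nat x'))^2 = int m" using p by simp
    hence "(nat x')^2 = m" by (metis of_nat_eq_iff of_nat_power)
    with nsq show False by blast
  qed
  have "int ((nat x')^2 + nat x' * nat y' + (nat y')^2) = int m" using p by simp
  hence "(nat x')^2 + nat x' * nat y' + (nat y')^2 = m" by (simp only: of_nat_eq_iff)
  moreover have "int (nat x') = x'" "int (nat y') = y'" using p by auto
  ultimately show ?thesis using p y0
    by (intro exI[of _ "nat x'"] exI[of _ "nat y'"]) auto
qed

lemma bwd:
  fixes n :: nat
  assumes n: "n > 0" and c: "count_1mod3_factors (n^2+n+1) \<ge> 2"
  shows "\<exists>a b :: nat. a > 0 \<and> b > 0 \<and> a^2 + a*b + b^2 = n^2+n+1 \<and> (a, b) \<notin> {(n, 1), (1, n)}"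
proof -
  define N where "N = n^2+n+1"
  have N0: "N \<noteq> 0" by (simp add: N_def)
  have Ni: "int N = (int n)^2 + int n + 1" by (simp add: N_def)
  have nsqN: "k^2 \<noteq> N" for k using N_not_sq[OF n] by (simp add: N_def)
  from get_primes[OF N0] c have cases:
    "(\<exists>p. prime p \<and> p^2 dvd N) \<or>
     (\<exists>p q. prime p \<and> prime q \<and> p \<noteq> q \<and> p mod 3 = 1 \<and> q mod 3 = 1 \<and> p dvd N \<and> q dvd N \<and> \<not> p^2 dvd N)"
    by (simp add: N_def)
  have "\<exists>a b :: nat. a > 0 \<and> b > 0 \<and> a^2 + a*b + b^2 = N \<and> (a, b) \<notin> {(n, 1), (1, n)}"
  proof (cases "\<exists>p. prime p \<and> p^2 dvd N")
    case True
    then obtain p M where p: "prime p" and M: "N = p^2 * M" by (auto elim: dvdE)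
    have p2: "p \<ge> 2" using p by (simp add: prime_ge_2_nat)
    have M1: "M \<ge> 1" using M N0 by (cases M) auto
    have "int M dvd int N" using M by simp
    hence dM: "int M dvd (int n)^2 + int n + 1" using Ni by simp
    have nsqM: "k^2 \<noteq> M" for k
    proof
      assume "k^2 = M"
      hence "(p*k)^2 = N" using M by (simp add: power_mult_distrib)
      with nsqN show False by blast
    qed
    obtain a0 b0 where ab: "a0 > 0" "b0 > 0" "a0^2+a0*b0+b0^2 = M"
      using rep_pos[OF M1 dM nsqM] by blast
    have "(p*a0)^2 + (p*a0)*(p*b0) + (p*b0)^2 = p^2*(a0^2+a0*b0+b0^2)"
      by (simp add: power2_eq_square algebra_simps)
    also have "\<dots> = N" using ab M by simp
    finally have e: "(p*a0)^2 + (p*a0)*(p*b0) + (p*b0)^2 = N" .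
    have "p*a0 \<ge> 2" "p*b0 \<ge> 2" using p2 ab
      by (metis dual_order.trans le_square mult.commute mult_le_mono2 nat_mult_1 Suc_leI One_nat_def)+
    thus ?thesis using e ab p2
      by (intro exI[of _ "p*a0"] exI[of _ "p*b0"]) auto
  next
    case False
    with cases obtain p q where pq: "prime p" "prime q" "p \<noteq> q" "p mod 3 = 1" "q mod 3 = 1"
      "p dvd N" "q dvd N" "\<not> p^2 dvd N" by blast
    obtain M where M: "N = p*M" using pq by (auto elim: dvdE)
    have pM: "\<not> p dvd M"
    proof
      assume "p dvd M"
      hence "p^2 dvd N" using M by (auto simp: power2_eq_square)
      with pq show False by simp
    qed
    have "coprime p M" using prime_imp_coprime[OF pq(1) pM] .
    hence cop: "coprime (int p) (int M)" by simp
    have "gcd (int p) (int M) = 1" using cop by simp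
    then obtain u v where uv: "u * int p + v * int M = 1" using bezout_int[of "int p" "int M"] by auto
    define t where "t = int n * v * int M + (-1 - int n) * u * int p"
    have tn: "t - int n = int p * (-(2*int n+1)*u)"
    proof -
      have "v * int M = 1 - u * int p" using uv by simp
      hence "t = int n * (1 - u * int p) + (-1 - int n) * u * int p" unfolding t_def by (metis mult.assoc)
      thus ?thesis by (simp add: algebra_simps)
    qed
    have tn1: "t + int n + 1 = int M * ((2*int n+1)*v)"
    proof -
      have "u * int p = 1 - v * int M" using uv by simp
      hence "t = int n * v * int M + (-1 - int n) * (1 - v * int M)" unfolding t_def by (metis mult.assoc)
      thus ?thesis by (simp add: algebra_simps)
    qed
    have pt: "int p dvd t - int n" using tn by simp
    have Mt: "int M dvd t + int n + 1" using tn1 by simp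
    have tt: "t^2+t+1 = int N + (t - int n)*(t + int n + 1)" unfolding Ni by (simp add: algebra_simps power2_eq_square)
    have "int p dvd int N" using M by simp
    hence "int p dvd t^2+t+1" unfolding tt using pt by simp
    moreover have "int M dvd int N" using M by simp
    hence "int M dvd t^2+t+1" unfolding tt using Mt by simp
    ultimately have "int p * int M dvd t^2+t+1" using cop divides_mult by blast
    hence dN: "int N dvd t^2+t+1" using M by simp
    have N1: "N \<ge> 1" using N0 by simp
    obtain a b where ab: "a > 0" "b > 0" "a^2+a*b+b^2 = N" "int N dvd int a - t*int b"
      using rep_pos[OF N1 dN nsqN] by blast
    have qM: "q dvd M"
    proof -
      have "q dvd p*M" using pq M by simp
      moreover have "\<not> q dvd p" using pq primes_dvd_imp_eq by metis
      ultimately show ?thesis using pq(2) prime_dvd_mult_iff by blast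
    qed
    have q3: "\<not> int q dvd 3"
    proof
      assume "int q dvd 3"
      hence "q dvd 3" by (metis of_nat_dvd_iff of_nat_numeral)
      hence "q = 3" using pq(2) primes_dvd_imp_eq[of q 3] by simp
      with pq show False by simp
    qed
    have p3: "\<not> int p dvd 3"
    proof
      assume "int p dvd 3"
      hence "p dvd 3" by (metis of_nat_dvd_iff of_nat_numeral)
      hence "p = 3" using pq(1) primes_dvd_imp_eq[of p 3] by simp
      with pq show False by simp
    qed
    have "(a, b) \<noteq> (n, 1)"
    proof
      assume "(a,b) = (n,1)"
      hence "int N dvd int n - t" using ab by simp
      moreover have "int q dvd int N" using pq by simp
      ultimately have "int q dvd int n - t" by (rule dvd_trans[rotated])
      moreover have "int q dvd t + int n + 1" using Mt qM by (meson dvd_trans of_nat_dvd_iff)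
      ultimately have "int q dvd (int n - t) + (t + int n + 1)" by (rule dvd_add)
      hence q2n: "int q dvd 2*int n + 1" by (simp add: algebra_simps)
      have "4 * int N = (2*int n+1)^2 + 3" unfolding Ni by (simp add: algebra_simps power2_eq_square)
      moreover have "int q dvd 4 * int N" using \<open>int q dvd int N\<close> by simp
      moreover have "int q dvd (2*int n+1)^2" using q2n by (simp add: power2_eq_square)
      ultimately have "int q dvd 3" by (metis dvd_add_right_iff)
      with q3 show False by simp
    qed
    moreover have "(a, b) \<noteq> (1, n)"
    proof
      assume "(a,b) = (1,n)"
      hence "int N dvd 1 - t * int n" using ab by simp
      hence "int p dvd 1 - t * int n" using pq by (meson dvd_trans of_nat_dvd_iff)
      moreover have "int p dvd (t - int n) * int n" using pt by simp
      ultimately have "int p dvd (1 - t * int n) + (t - int n) * int n" by (rule dvd_add)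
      hence h1: "int p dvd 1 - (int n)^2" by (simp add: algebra_simps power2_eq_square)
      have hN: "int p dvd (int n)^2 + int n + 1" using pq Ni by (metis of_nat_dvd_iff)
      have "int p dvd (1 - (int n)^2) + ((int n)^2 + int n + 1)" using h1 hN by (rule dvd_add)
      hence h2: "int p dvd int n + 2" by (simp add: algebra_simps)
      hence "int p dvd (int n + 2) * (int n - 2)" by simp
      hence "int p dvd (1 - (int n)^2) + (int n + 2) * (int n - 2)" using h1 by (simp add: dvd_add)
      hence "int p dvd -3" by (simp add: algebra_simps power2_eq_square)
      with p3 show False by simp
    qed
    ultimately show ?thesis using ab by blast
  qed
  thus ?thesis by (simp add: N_def)
qed

theorem theorem3:
  fixes n :: nat
  assumes "n > 0"
  defines "N \<equiv> n^2 + n + 1"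
  shows "(\<exists>a b :: nat. a > 0 \<and> b > 0 \<and> a^2 + a*b + b^2 = N \<and> (a, b) \<notin> {(n, 1), (1, n)})
         \<longleftrightarrow> count_1mod3_factors N \<ge> 2"
proof
  assume "\<exists>a b :: nat. a > 0 \<and> b > 0 \<and> a^2 + a*b + b^2 = N \<and> (a, b) \<notin> {(n, 1), (1, n)}"
  then obtain a b where ab: "a > 0" "b > 0" "a^2 + a*b + b^2 = n^2+n+1" "(a, b) \<notin> {(n, 1), (1, n)}"
    unfolding N_def by blast
  show "count_1mod3_factors N \<ge> 2"
  proof (rule ccontr)
    assume "\<not> count_1mod3_factors N \<ge> 2"
    hence "count_1mod3_factors (n^2+n+1) \<le> 1" unfolding N_def by simp
    from fwd[OF assms(1) this ab(1-3)] ab(4) show False by auto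
  qed
next
  assume "count_1mod3_factors N \<ge> 2"
  thus "\<exists>a b :: nat. a > 0 \<and> b > 0 \<and> a^2 + a*b + b^2 = N \<and> (a, b) \<notin> {(n, 1), (1, n)}"
    unfolding N_def using bwd[OF assms(1)] by blast
qed

end
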